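(* Let $\mathcal{A}\subseteq\mathbb{R}^3$, $K\ge2$, $P_1,\ldots,P_K>0$, $\sigma^2>0$, and $h_1,\ldots,h_K\in L^2(\mathcal{A})$ with positive definite Gram matrix $\mathbf{R}$, $[\mathbf{R}]_{k_1,k_2}=\int_{\mathcal{A}}h_{k_1}^{*}h_{k_2}\,\mathrm{d}\mathbf{r}$. Fix $k$, let $\mathbf{h}_{\setminus k}(\mathbf{r})=[h_{k'}(\mathbf{r})]_{k'\neq k}\in\mathbb{C}^{1\times(K-1)}$, $\mathbf{R}_k=\int_{\mathcal{A}}\mathbf{h}_{\setminus k}^{\mathsf{H}}\mathbf{h}_{\setminus k}\,\mathrm{d}\mathbf{r}$, $\mathbf{P}_k=\mathrm{diag}(P_{k'}/\sigma^2)_{k'\neq k}$, and $\mathbf{C}_k=\mathbf{P}_k^{1/2}\mathbf{R}_k\mathbf{P}_k^{1/2}$ with eigendecomposition $\mathbf{C}_k=\mathbf{U}_k\,\mathrm{diag}(\lambda_{k'})_{k'\neq k}\mathbf{U}_k^{\mathsf{H}}$, $\lambda_{k'}>0$. Let $\mathbf{B}_k=\mathbf{U}_k\,\mathrm{diag}\big(\tfrac{1+\sqrt{1+\lambda_{k'}}}{\lambda_{k'}}\big)\mathbf{U}_k^{\mathsf{H}}$ and let $B_k$ be the operator on $L^2(\mathcal{A})$ with kernel $\delta(\mathbf{r}-\mathbf{r}')-\mathbf{h}_{\setminus k}(\mathbf{r})\mathbf{P}_k^{1/2}\mathbf{B}_k\mathbf{P}_k^{1/2}\mathbf{h}_{\setminus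 k}^{\mathsf{H}}(\mathbf{r}')$. For $w_k\in L^2(\mathcal{A})$ define $$f_{\mathsf{dm}}(w_k)=\iint_{\mathcal{A}^2}w_k^{*}(\mathbf{r})C_k(\mathbf{r},\mathbf{r}')w_k(\mathbf{r}')\,\mathrm{d}\mathbf{r}'\mathrm{d}\mathbf{r},\qquad C_k(\mathbf{r},\mathbf{r}')=\delta(\mathbf{r}-\mathbf{r}')+\sum_{k'\neq k}\frac{P_{k'}}{\sigma^2}h_{k'}(\mathbf{r})h_{k'}^{*}(\mathbf{r}'),$$ that is, $f_{\mathsf{dm}}(w_k)=\int_{\mathcal{A}}|w_k|^2\,\mathrm{d}\mathbf{r}+\sum_{k'\neq k}\frac{P_{k'}}{\sigma^2}\big|\int_{\mathcal{A}}h_{k'}^*w_k\,\mathrm{d}\mathbf{r}\big|^2$, and let $u_k(\mathbf{r})=\int_{\mathcal{A}}B_k(\mathbf{r},\mathbf{r}')w_k(\mathbf{r}')\,\mathrm{d}\mathbf{r}'$. Then $f_{\mathsf{dm}}(w_k)=\int_{\mathcal{A}}|u_k(\mathbf{r})|^2\,\mathrm{d}\mathbf{r}$.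
   Context: Kernels containing $\delta(\mathbf{r}-\mathbf{r}')$ denote the identity plus a finite-rank integral operator. Standing assumption: channel responses pairwise non-parallel and $\mathbf{R}$ positive definite. *)

theory Defs
  imports "HOL-Analysis.Analysis"
begin

text \<open>Points of the aperture region are in R^3; functions are complex-valued on A.
  Channel indices are 1..K; for fixed k the index set of the others is {1..K} - {k}.\<close>

type_synonym pt = "real ^ 3"

definition L2 :: "pt set \<Rightarrow> (pt \<Rightarrow> complex) \<Rightarrow> bool" where
  "L2 A f \<longleftrightarrow> f \<in> borel_measurable (lebesgue_on A) \<and>
                integrable (lebesgue_on A) (\<lambda>r. (cmod (f r))\<^sup>2)"

definition ip :: "pt set \<Rightarrow> (pt \<Rightarrow> complex) \<Rightarrow> (pt \<Rightarrow> complex) \<Rightarrow> complex" where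
  "ip A f g = (LINT r|lebesgue_on A. cnj (f r) * g r)"

definition gram :: "pt set \<Rightarrow> (nat \<Rightarrow> pt \<Rightarrow> complex) \<Rightarrow> nat \<Rightarrow> nat \<Rightarrow> complex" where
  "gram A h i j = ip A (h i) (h j)"

definition pos_def_on :: "nat set \<Rightarrow> (nat \<Rightarrow> nat \<Rightarrow> complex) \<Rightarrow> bool" where
  "pos_def_on I M \<longleftrightarrow> (\<forall>x::nat \<Rightarrow> complex. (\<exists>i\<in>I. x i \<noteq> 0) \<longrightarrow>
      (let q = (\<Sum>i\<in>I. \<Sum>j\<in>I. cnj (x i) * M i j * x j) in Im q = 0 \<and> Re q > 0))"

definition unitary_on :: "nat set \<Rightarrow> (nat \<Rightarrow> nat \<Rightarrow> complex) \<Rightarrow> bool" where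
  "unitary_on I U \<longleftrightarrow> (\<forall>i\<in>I. \<forall>j\<in>I. (\<Sum>l\<in>I. cnj (U l i) * U l j) = (if i = j then 1 else 0))"

definition Rk :: "pt set \<Rightarrow> (nat \<Rightarrow> pt \<Rightarrow> complex) \<Rightarrow> nat \<Rightarrow> nat \<Rightarrow> complex" where
  "Rk A h i j = (LINT r|lebesgue_on A. cnj (h i r) * h j r)"

definition Ck :: "pt set \<Rightarrow> (nat \<Rightarrow> pt \<Rightarrow> complex) \<Rightarrow> (nat \<Rightarrow> real) \<Rightarrow> real \<Rightarrow> nat \<Rightarrow> nat \<Rightarrow> complex" where
  "Ck A h P \<sigma>2 i j = complex_of_real (sqrt (P i / \<sigma>2)) * Rk A h i j * complex_of_real (sqrt (P j / \<sigma>2))"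

definition Bk :: "nat set \<Rightarrow> (nat \<Rightarrow> nat \<Rightarrow> complex) \<Rightarrow> (nat \<Rightarrow> real) \<Rightarrow> nat \<Rightarrow> nat \<Rightarrow> complex" where
  "Bk I U lam i j = (\<Sum>l\<in>I. U i l * complex_of_real ((1 + sqrt (1 + lam l)) / lam l) * cnj (U j l))"

definition apply_Bop :: "pt set \<Rightarrow> nat set \<Rightarrow> (nat \<Rightarrow> pt \<Rightarrow> complex) \<Rightarrow> (nat \<Rightarrow> real) \<Rightarrow> real
     \<Rightarrow> (nat \<Rightarrow> nat \<Rightarrow> complex) \<Rightarrow> (pt \<Rightarrow> complex) \<Rightarrow> pt \<Rightarrow> complex" where
  "apply_Bop A I h P \<sigma>2 B w r = w r -
     (\<Sum>i\<in>I. \<Sum>j\<in>I. h i r * complex_of_real (sqrt (P i / \<sigma>2)) * B i j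
        * complex_of_real (sqrt (P j / \<sigma>2)) * (LINT r'|lebesgue_on A. cnj (h j r') * w r'))"

definition f_dm :: "pt set \<Rightarrow> nat set \<Rightarrow> (nat \<Rightarrow> pt \<Rightarrow> complex) \<Rightarrow> (nat \<Rightarrow> real) \<Rightarrow> real
     \<Rightarrow> (pt \<Rightarrow> complex) \<Rightarrow> real" where
  "f_dm A I h P \<sigma>2 w = (LINT r|lebesgue_on A. (cmod (w r))\<^sup>2)
     + (\<Sum>i\<in>I. P i / \<sigma>2 * (cmod (LINT r|lebesgue_on A. cnj (h i r) * w r))\<^sup>2)"

end

theory Submission imports Defs begin
lemma L2_prod_int:
  assumes "L2 A f" "L2 A g"
  shows "integrable (lebesgue_on A) (\<lambda>r. cnj (f r) * g r)"
proof -
  have 1: "integrable (lebesgue_on A) (\<lambda>r. (cmod (f r))\<^sup>2 + (cmod (g r))\<^sup>2)"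
    using assms unfolding L2_def by auto
  have 2: "(\<lambda>r. cnj (f r) * g r) \<in> borel_measurable (lebesgue_on A)"
  proof -
    have f: "f \<in> borel_measurable (lebesgue_on A)" and g: "g \<in> borel_measurable (lebesgue_on A)"
      using assms unfolding L2_def by auto
    have "(\<lambda>r. cnj (f r)) \<in> borel_measurable (lebesgue_on A)"
      by (rule borel_measurable_continuous_on[OF _ f]) (intro continuous_intros)
    then show ?thesis using g by (rule borel_measurable_times)
  qed
  have 3: "AE x in lebesgue_on A. norm (cnj (f x) * g x) \<le> norm ((cmod (f x))\<^sup>2 + (cmod (g x))\<^sup>2)"
  proof (rule AE_I2)
    fix x
    have "cmod (f x) * cmod (g x) \<le> (cmod (f x))\<^sup>2 + (cmod (g x))\<^sup>2"
    proof -
      have "0 \<le> (cmod (f x) - cmod (g x))\<^sup>2" by simp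
      then show ?thesis unfolding power2_diff using zero_le_power2[of "cmod (f x)"] zero_le_power2[of "cmod (g x)"] by linarith
    qed
    then show "norm (cnj (f x) * g x) \<le> norm ((cmod (f x))\<^sup>2 + (cmod (g x))\<^sup>2)"
      by (simp add: norm_mult)
  qed
  show ?thesis by (rule Bochner_Integration.integrable_bound[OF 1 2 3])
qed

lemma ip_expand:
  assumes fin: "finite J" and L: "\<And>i. i \<in> J \<Longrightarrow> L2 A (F i)"
  shows "(LINT r|lebesgue_on A. cnj (\<Sum>i\<in>J. a i * F i r) * (\<Sum>j\<in>J. b j * F j r))
       = (\<Sum>i\<in>J. \<Sum>j\<in>J. cnj (a i) * b j * (LINT r|lebesgue_on A. cnj (F i r) * F j r))"
proof -
  have "(\<lambda>r. cnj (\<Sum>i\<in>J. a i * F i r) * (\<Sum>j\<in>J. b j * F j r))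
      = (\<lambda>r. \<Sum>i\<in>J. \<Sum>j\<in>J. cnj (a i) * b j * (cnj (F i r) * F j r))"
    unfolding cnj_sum sum_product complex_cnj_mult by (intro ext sum.cong refl) (simp only: ac_simps)
  moreover have "\<And>i j. i \<in> J \<Longrightarrow> j \<in> J \<Longrightarrow> integrable (lebesgue_on A) (\<lambda>r. cnj (F i r) * F j r)"
    using L L2_prod_int by blast
  ultimately show ?thesis
    by (simp add: integral_sum integrable_sum)
qed

lemma norm_int:
  shows "complex_of_real (LINT r|lebesgue_on A. (cmod (u r))\<^sup>2) = (LINT r|lebesgue_on A. cnj (u r) * u r)"
proof -
  have eq: "(\<lambda>r. cnj (u r) * u r) = (\<lambda>r. complex_of_real ((cmod (u r))\<^sup>2))"
    by (metis complex_norm_square mult.commute)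
  show ?thesis unfolding eq by (rule integral_complex_of_real[symmetric])
qed
lemma dreal:
  fixes l :: real assumes "l > 0"
  shows "l * ((1 + sqrt (1 + l)) / l)\<^sup>2 - 2 * ((1 + sqrt (1 + l)) / l) = 1"
proof -
  define s where "s = sqrt (1 + l)"
  have s2: "s\<^sup>2 = 1 + l" unfolding s_def using assms by simp
  have "l * ((1 + s) / l)\<^sup>2 - 2 * ((1 + s) / l) = ((1 + s)\<^sup>2 - 2 * (1 + s)) / l"
    using assms by (simp add: field_simps power2_eq_square)
  also have "(1 + s)\<^sup>2 - 2 * (1 + s) = l" using s2 by (simp add: power2_eq_square algebra_simps)
  finally show ?thesis using assms s_def by simp
qed

lemma unit_apply:
  assumes fin: "finite I" and U: "unitary_on I U" and m: "m \<in> I"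
  shows "(\<Sum>i\<in>I. cnj (U i m) * (\<Sum>l\<in>I. U i l * x l)) = x m"
proof -
  have "(\<Sum>i\<in>I. cnj (U i m) * (\<Sum>l\<in>I. U i l * x l)) = (\<Sum>l\<in>I. (\<Sum>i\<in>I. cnj (U i m) * U i l) * x l)"
    by (simp add: sum_distrib_left sum_distrib_right mult.assoc) (rule sum.swap)
  also have "\<dots> = (\<Sum>l\<in>I. (if m = l then x l else 0))"
    using U m unfolding unitary_on_def by (intro sum.cong refl) auto
  also have "\<dots> = x m" using fin m by (simp add: sum.delta)
  finally show ?thesis .
qed

lemma swap2:
  fixes a v :: "nat \<Rightarrow> complex" and b :: "nat \<Rightarrow> nat \<Rightarrow> complex"
  shows   "(\<Sum>j\<in>I. (\<Sum>m\<in>I. a m * b j m) * v j) = (\<Sum>m\<in>I. a m * (\<Sum>j\<in>I. b j m * v j))"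
  by (simp add: sum_distrib_left sum_distrib_right mult.assoc) (rule sum.swap)

lemma alg:
  fixes I :: "nat set" and U C :: "nat \<Rightarrow> nat \<Rightarrow> complex" and lam :: "nat \<Rightarrow> real"
    and g :: "nat \<Rightarrow> complex"
  assumes fin: "finite I" and U: "unitary_on I U"
    and eig: "\<And>i j. i \<in> I \<Longrightarrow> j \<in> I \<Longrightarrow> C i j = (\<Sum>l\<in>I. U i l * complex_of_real (lam l) * cnj (U j l))"
    and pd: "\<And>z. (\<exists>i\<in>I. z i \<noteq> 0) \<Longrightarrow> (\<Sum>i\<in>I. \<Sum>j\<in>I. cnj (z i) * C i j * z j) \<noteq> 0"
    and lpos: "\<And>l. l \<in> I \<Longrightarrow> lam l > 0"
    and c_def: "c = (\<lambda>i. \<Sum>j\<in>I. Bk I U lam i j * g j)"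
  shows "(\<Sum>i\<in>I. cnj (g i) * g i) = - (\<Sum>j\<in>I. c j * cnj (g j)) - (\<Sum>i\<in>I. cnj (c i) * g i)
           + (\<Sum>i\<in>I. \<Sum>j\<in>I. cnj (c i) * C i j * c j)"
proof -
  define y where "y = (\<lambda>l. \<Sum>i\<in>I. cnj (U i l) * g i)"
  define d where "d = (\<lambda>l. complex_of_real ((1 + sqrt (1 + lam l)) / lam l))"
  have cnjd: "cnj (d l) = d l" for l unfolding d_def by simp
  have Capp: "(\<Sum>j\<in>I. C i j * (\<Sum>l\<in>I. U j l * x l)) = (\<Sum>l\<in>I. U i l * complex_of_real (lam l) * x l)"
    if i: "i \<in> I" for i x
  proof -
    have "(\<Sum>j\<in>I. C i j * (\<Sum>l\<in>I. U j l * x l))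
        = (\<Sum>j\<in>I. (\<Sum>m\<in>I. U i m * complex_of_real (lam m) * cnj (U j m)) * (\<Sum>l\<in>I. U j l * x l))"
      using eig i by simp
    also have "\<dots> = (\<Sum>m\<in>I. U i m * complex_of_real (lam m) * (\<Sum>j\<in>I. cnj (U j m) * (\<Sum>l\<in>I. U j l * x l)))"
      by (rule swap2)
    also have "\<dots> = (\<Sum>m\<in>I. U i m * complex_of_real (lam m) * x m)"
      using unit_apply[OF fin U] by simp
    finally show ?thesis .
  qed
  have c_eq: "c i = (\<Sum>l\<in>I. U i l * (d l * y l))" for i
  proof -
    have "c i = (\<Sum>j\<in>I. (\<Sum>l\<in>I. U i l * d l * cnj (U j l)) * g j)"
      unfolding c_def Bk_def d_def by simp
    also have "\<dots> = (\<Sum>l\<in>I. U i l * d l * (\<Sum>j\<in>I. cnj (U j l) * g j))"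
      by (rule swap2)
    finally show ?thesis unfolding y_def by (simp add: mult.assoc)
  qed
  have S2: "(\<Sum>j\<in>I. c j * cnj (g j)) = (\<Sum>l\<in>I. d l * y l * cnj (y l))"
  proof -
    have "(\<Sum>j\<in>I. c j * cnj (g j)) = (\<Sum>j\<in>I. (\<Sum>l\<in>I. U j l * (d l * y l)) * cnj (g j))"
      using c_eq by simp
    also have "\<dots> = (\<Sum>l\<in>I. d l * y l * (\<Sum>j\<in>I. U j l * cnj (g j)))"
      by (simp add: sum_distrib_left sum_distrib_right mult_ac) (rule sum.swap)
    finally show ?thesis unfolding y_def by (simp add: cnj_sum)
  qed
  have S3: "(\<Sum>i\<in>I. cnj (c i) * g i) = (\<Sum>l\<in>I. d l * y l * cnj (y l))"
  proof -
    have "(\<Sum>i\<in>I. cnj (c i) * g i) = cnj (\<Sum>j\<in>I. c j * cnj (g j))" by (simp add: cnj_sum)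
    also have "\<dots> = (\<Sum>l\<in>I. d l * y l * cnj (y l))" unfolding S2 by (simp add: cnj_sum cnjd mult_ac)
    finally show ?thesis .
  qed
  have S6: "(\<Sum>i\<in>I. \<Sum>j\<in>I. cnj (c i) * C i j * c j)
      = (\<Sum>l\<in>I. complex_of_real (lam l) * (d l * y l) * cnj (d l * y l))"
  proof -
    have "(\<Sum>i\<in>I. \<Sum>j\<in>I. cnj (c i) * C i j * c j) = (\<Sum>i\<in>I. cnj (c i) * (\<Sum>j\<in>I. C i j * c j))"
      by (simp add: sum_distrib_left mult.assoc)
    also have "\<dots> = (\<Sum>i\<in>I. cnj (c i) * (\<Sum>l\<in>I. U i l * complex_of_real (lam l) * (d l * y l)))"
      unfolding c_eq using Capp by simp
    also have "\<dots> = (\<Sum>l\<in>I. complex_of_real (lam l) * (d l * y l) * (\<Sum>i\<in>I. cnj (c i) * U i l))"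
      by (simp add: sum_distrib_left sum_distrib_right mult_ac) (rule sum.swap)
    also have "\<dots> = (\<Sum>l\<in>I. complex_of_real (lam l) * (d l * y l) * cnj (d l * y l))"
    proof (intro sum.cong refl)
      fix l assume l: "l \<in> I"
      have "(\<Sum>i\<in>I. cnj (c i) * U i l) = cnj (\<Sum>i\<in>I. cnj (U i l) * c i)" by (simp add: cnj_sum mult.commute)
      also have "(\<Sum>i\<in>I. cnj (U i l) * c i) = d l * y l" unfolding c_eq using unit_apply[OF fin U l] by simp
      finally show "complex_of_real (lam l) * (d l * y l) * (\<Sum>i\<in>I. cnj (c i) * U i l)
          = complex_of_real (lam l) * (d l * y l) * cnj (d l * y l)" by simp
    qed
    finally show ?thesis .
  qed
  define z where "z = (\<lambda>i. g i - (\<Sum>l\<in>I. U i l * y l))"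
  have UHz: "(\<Sum>i\<in>I. cnj (U i m) * z i) = 0" if m: "m \<in> I" for m
  proof -
    have "(\<Sum>i\<in>I. cnj (U i m) * z i) = y m - (\<Sum>i\<in>I. cnj (U i m) * (\<Sum>l\<in>I. U i l * y l))"
      unfolding z_def y_def by (simp add: right_diff_distrib sum_subtractf)
    then show ?thesis using unit_apply[OF fin U m] by simp
  qed
  have Cz: "(\<Sum>j\<in>I. C i j * z j) = 0" if i: "i \<in> I" for i
  proof -
    have "(\<Sum>j\<in>I. C i j * z j) = (\<Sum>j\<in>I. (\<Sum>m\<in>I. U i m * complex_of_real (lam m) * cnj (U j m)) * z j)"
      using eig i by simp
    also have "\<dots> = (\<Sum>m\<in>I. U i m * complex_of_real (lam m) * (\<Sum>j\<in>I. cnj (U j m) * z j))"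
      by (rule swap2)
    also have "\<dots> = 0" using UHz by simp
    finally show ?thesis .
  qed
  have "(\<Sum>i\<in>I. \<Sum>j\<in>I. cnj (z i) * C i j * z j) = 0"
    using Cz by (simp add: sum_distrib_left[symmetric] mult.assoc)
  then have z0: "z i = 0" if "i \<in> I" for i using pd that by blast
  have S7: "(\<Sum>i\<in>I. cnj (g i) * g i) = (\<Sum>l\<in>I. cnj (y l) * y l)"
  proof -
    have g: "g i = (\<Sum>l\<in>I. U i l * y l)" if "i \<in> I" for i using z0[OF that] unfolding z_def by simp
    have "(\<Sum>i\<in>I. cnj (g i) * g i) = (\<Sum>i\<in>I. cnj (g i) * (\<Sum>l\<in>I. U i l * y l))"
      using g by simp
    also have "\<dots> = (\<Sum>l\<in>I. y l * (\<Sum>i\<in>I. U i l * cnj (g i)))"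
      by (simp add: sum_distrib_left sum_distrib_right mult_ac) (rule sum.swap)
    also have "\<dots> = (\<Sum>l\<in>I. cnj (y l) * y l)"
      unfolding y_def by (simp add: cnj_sum mult.commute)
    finally show ?thesis .
  qed
  have termeq: "cnj (y l) * y l = - (d l * y l * cnj (y l)) - (d l * y l * cnj (y l))
      + complex_of_real (lam l) * (d l * y l) * cnj (d l * y l)" if l: "l \<in> I" for l
  proof -
    have r: "lam l * ((1 + sqrt (1 + lam l)) / lam l)\<^sup>2 - 2 * ((1 + sqrt (1 + lam l)) / lam l) = 1"
      using dreal lpos[OF l] by blast
    have "complex_of_real (lam l) * (d l)\<^sup>2 - 2 * d l = 1"
      unfolding d_def using arg_cong[OF r, of complex_of_real] by simp
    then have "cnj (y l) * y l = (complex_of_real (lam l) * (d l)\<^sup>2 - 2 * d l) * (cnj (y l) * y l)" by simp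
    then show ?thesis by (simp add: cnjd algebra_simps power2_eq_square)
  qed
  show ?thesis
    unfolding S7 S2 S3 S6 using termeq
    by (simp add: sum_subtractf[symmetric] sum.distrib[symmetric] sum_negf[symmetric])
qed


theorem lemma9:
  fixes A :: "pt set" and K k :: nat and P :: "nat \<Rightarrow> real" and \<sigma>2 :: real
    and h :: "nat \<Rightarrow> pt \<Rightarrow> complex" and U :: "nat \<Rightarrow> nat \<Rightarrow> complex"
    and lam :: "nat \<Rightarrow> real" and w :: "pt \<Rightarrow> complex"
  assumes A_meas: "A \<in> sets lebesgue"
    and K2: "K \<ge> 2"
    and Ppos: "\<And>i. i \<in> {1..K} \<Longrightarrow> P i > 0"
    and sigma: "\<sigma>2 > 0"
    and hL2: "\<And>i. i \<in> {1..K} \<Longrightarrow> L2 A (h i)"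
    and Rpd: "pos_def_on {1..K} (gram A h)"
    and k: "k \<in> {1..K}"
    and U: "unitary_on ({1..K} - {k}) U"
    and eig: "\<And>i j. i \<in> {1..K} - {k} \<Longrightarrow> j \<in> {1..K} - {k} \<Longrightarrow>
               Ck A h P \<sigma>2 i j = (\<Sum>l\<in>{1..K} - {k}. U i l * complex_of_real (lam l) * cnj (U j l))"
    and lpos: "\<And>l. l \<in> {1..K} - {k} \<Longrightarrow> lam l > 0"
    and wL2: "L2 A w"
  shows "f_dm A ({1..K} - {k}) h P \<sigma>2 w =
         (LINT r|lebesgue_on A.
            (cmod (apply_Bop A ({1..K} - {k}) h P \<sigma>2 (Bk ({1..K} - {k}) U lam) w r))\<^sup>2)"
proof -
  define I where "I = {1..K} - {k}"
  have fin: "finite I" unfolding I_def by simp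
  have I0: "0 \<notin> I" unfolding I_def by simp
  have IK: "I \<subseteq> {1..K}" unfolding I_def by auto
  define s where "s = (\<lambda>i. sqrt (P i / \<sigma>2))"
  define C where "C = Ck A h P \<sigma>2"
  define L where "L = (\<lambda>i. LINT r|lebesgue_on A. cnj (h i r) * w r)"
  define g where "g = (\<lambda>i. complex_of_real (s i) * L i)"
  define B where "B = Bk I U lam"
  define c where "c = (\<lambda>i. \<Sum>j\<in>I. B i j * g j)"
  have pd: "(\<Sum>i\<in>I. \<Sum>j\<in>I. cnj (z i) * C i j * z j) \<noteq> 0" if nz: "\<exists>i\<in>I. z i \<noteq> 0" for z
  proof -
    define x where "x = (\<lambda>i. if i \<in> I then complex_of_real (s i) * z i else 0)"
    have spos: "s i > 0" if "i \<in> I" for i using Ppos IK that sigma unfolding s_def by auto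
    have xnz: "\<exists>i\<in>{1..K}. x i \<noteq> 0" using nz IK spos unfolding x_def by fastforce
    have "(\<Sum>i\<in>{1..K}. \<Sum>j\<in>{1..K}. cnj (x i) * gram A h i j * x j)
        = (\<Sum>i\<in>I. \<Sum>j\<in>{1..K}. cnj (x i) * gram A h i j * x j)"
      by (rule sum.mono_neutral_right) (use IK in \<open>auto simp: x_def\<close>)
    also have "\<dots> = (\<Sum>i\<in>I. \<Sum>j\<in>I. cnj (x i) * gram A h i j * x j)"
      by (intro sum.cong refl sum.mono_neutral_right) (use IK in \<open>auto simp: x_def\<close>)
    also have "\<dots> = (\<Sum>i\<in>I. \<Sum>j\<in>I. cnj (z i) * C i j * z j)"
      by (intro sum.cong refl) (simp add: x_def C_def Ck_def gram_def ip_def Rk_def s_def)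
    finally have eq: "(\<Sum>i\<in>{1..K}. \<Sum>j\<in>{1..K}. cnj (x i) * gram A h i j * x j)
        = (\<Sum>i\<in>I. \<Sum>j\<in>I. cnj (z i) * C i j * z j)" .
    have "Re (\<Sum>i\<in>{1..K}. \<Sum>j\<in>{1..K}. cnj (x i) * gram A h i j * x j) > 0"
      using Rpd xnz unfolding pos_def_on_def Let_def by blast
    then show ?thesis unfolding eq by (metis less_irrefl zero_complex.sel(1))
  qed
  have ALG: "(\<Sum>i\<in>I. cnj (g i) * g i) = - (\<Sum>j\<in>I. c j * cnj (g j)) - (\<Sum>i\<in>I. cnj (c i) * g i)
           + (\<Sum>i\<in>I. \<Sum>j\<in>I. cnj (c i) * C i j * c j)"
  proof (rule alg[where c=c])
    show "finite I" by (rule fin)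
    show "unitary_on I U" using U unfolding I_def .
    show "C i j = (\<Sum>l\<in>I. U i l * complex_of_real (lam l) * cnj (U j l))" if "i \<in> I" "j \<in> I" for i j
      using eig that unfolding I_def C_def by blast
    show "(\<Sum>i\<in>I. \<Sum>j\<in>I. cnj (z i) * C i j * z j) \<noteq> 0" if "\<exists>i\<in>I. z i \<noteq> 0" for z
      using pd that by blast
    show "lam l > 0" if "l \<in> I" for l using lpos that unfolding I_def by blast
    show "c = (\<lambda>i. \<Sum>j\<in>I. Bk I U lam i j * g j)" unfolding c_def B_def ..
  qed
  define F where "F = (\<lambda>i. if i = 0 then w else h i)"
  define a where "a = (\<lambda>i. if i = 0 then 1 else - (complex_of_real (s i) * c i))"
  define J where "J = insert 0 I"
  define G where "G = (\<lambda>i j. LINT r|lebesgue_on A. cnj (F i r) * F j r)"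
  have FL2: "L2 A (F i)" if "i \<in> J" for i
    using that IK hL2 wL2 unfolding J_def F_def by auto
  have u_eq: "apply_Bop A I h P \<sigma>2 B w r = (\<Sum>i\<in>J. a i * F i r)" for r
  proof -
    have "(\<Sum>i\<in>I. \<Sum>j\<in>I. h i r * complex_of_real (s i) * B i j * complex_of_real (s j) * L j)
        = (\<Sum>i\<in>I. h i r * complex_of_real (s i) * c i)"
      unfolding c_def g_def by (intro sum.cong refl) (simp add: sum_distrib_left mult_ac)
    moreover have "(\<Sum>i\<in>J. a i * F i r) = w r - (\<Sum>i\<in>I. h i r * complex_of_real (s i) * c i)"
    proof -
      have "(\<Sum>i\<in>I. a i * F i r) = (\<Sum>i\<in>I. - (h i r * complex_of_real (s i) * c i))"
        by (rule sum.cong) (use I0 in \<open>auto simp: a_def F_def\<close>)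
      then show ?thesis unfolding J_def using fin I0
        by (simp add: a_def F_def sum_negf)
    qed
    ultimately show ?thesis unfolding apply_Bop_def s_def L_def by simp
  qed
  have "complex_of_real (LINT r|lebesgue_on A. (cmod (apply_Bop A I h P \<sigma>2 B w r))\<^sup>2)
      = (LINT r|lebesgue_on A. cnj (\<Sum>i\<in>J. a i * F i r) * (\<Sum>j\<in>J. a j * F j r))"
    unfolding u_eq by (rule norm_int)
  also have "\<dots> = (\<Sum>i\<in>J. \<Sum>j\<in>J. cnj (a i) * a j * G i j)"
    unfolding G_def by (rule ip_expand) (use fin J_def FL2 in auto)
  also have "\<dots> = G 0 0 + (\<Sum>j\<in>I. a j * G 0 j) + (\<Sum>i\<in>I. cnj (a i) * G i 0)
       + (\<Sum>i\<in>I. \<Sum>j\<in>I. cnj (a i) * a j * G i j)"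
    unfolding J_def using fin I0 by (simp add: a_def sum.distrib cong: sum.cong)
  also have "(\<Sum>j\<in>I. a j * G 0 j) = - (\<Sum>j\<in>I. c j * cnj (g j))"
  proof -
    have "a j * G 0 j = - (c j * cnj (g j))" if "j \<in> I" for j
    proof -
      have "cnj (L j) = (LINT r|lebesgue_on A. cnj (w r) * h j r)"
      proof -
        have e: "(\<lambda>r. cnj (w r) * h j r) = (\<lambda>r. cnj (cnj (h j r) * w r))" by (auto simp: mult.commute)
        show ?thesis unfolding e L_def by (simp only: Bochner_Integration.integral_cnj)
      qed
      then have "G 0 j = cnj (L j)" using that I0 unfolding G_def F_def by auto
      moreover have "j \<noteq> 0" using that I0 by metis
      ultimately show ?thesis unfolding a_def g_def by simp
    qed
    then show ?thesis by (simp add: sum_negf[symmetric] cong: sum.cong)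
  qed
  also have "(\<Sum>i\<in>I. cnj (a i) * G i 0) = - (\<Sum>i\<in>I. cnj (c i) * g i)"
  proof -
    have "cnj (a i) * G i 0 = - (cnj (c i) * g i)" if "i \<in> I" for i
    proof -
      have "G i 0 = L i" using that I0 unfolding G_def L_def F_def by auto
      moreover have "i \<noteq> 0" using that I0 by metis
      ultimately show ?thesis unfolding a_def g_def by (simp add: mult_ac)
    qed
    then show ?thesis by (simp add: sum_negf[symmetric] cong: sum.cong)
  qed
  also have "(\<Sum>i\<in>I. \<Sum>j\<in>I. cnj (a i) * a j * G i j) = (\<Sum>i\<in>I. \<Sum>j\<in>I. cnj (c i) * C i j * c j)"
  proof (intro sum.cong refl)
    fix i j assume ij: "i \<in> I" "j \<in> I"
    have "G i j = Rk A h i j" using ij I0 unfolding G_def F_def Rk_def by auto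
    then show "cnj (a i) * a j * G i j = cnj (c i) * C i j * c j"
      using ij I0 unfolding a_def C_def Ck_def s_def by (cases "i = 0"; cases "j = 0") (auto simp: mult_ac)
  qed
  finally have RHS: "complex_of_real (LINT r|lebesgue_on A. (cmod (apply_Bop A I h P \<sigma>2 B w r))\<^sup>2)
      = G 0 0 + (\<Sum>i\<in>I. cnj (g i) * g i)"
    unfolding ALG by simp
  have LHS: "complex_of_real (f_dm A I h P \<sigma>2 w) = G 0 0 + (\<Sum>i\<in>I. cnj (g i) * g i)"
  proof -
    have G00: "G 0 0 = complex_of_real (LINT r|lebesgue_on A. (cmod (w r))\<^sup>2)"
      unfolding G_def F_def norm_int by simp
    have "complex_of_real (P i / \<sigma>2 * (cmod (L i))\<^sup>2) = cnj (g i) * g i" if "i \<in> I" for i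
    proof -
      have "P i / \<sigma>2 \<ge> 0" using that IK Ppos sigma by (smt (verit) divide_pos_pos subsetD)
      then have "complex_of_real (P i / \<sigma>2) = complex_of_real (s i) * complex_of_real (s i)"
      proof -
        have "s i * s i = P i / \<sigma>2" unfolding s_def
          using \<open>P i / \<sigma>2 \<ge> 0\<close> by (metis abs_of_nonneg real_sqrt_mult_self)
        then show ?thesis by (metis of_real_mult)
      qed
      moreover have "complex_of_real ((cmod (L i))\<^sup>2) = cnj (L i) * L i"
        by (metis complex_norm_square mult.commute)
      ultimately show ?thesis unfolding g_def of_real_mult by (simp add: mult_ac)
    qed
    then show ?thesis unfolding f_dm_def G00 L_def by (simp cong: sum.cong)
  qed
  have "complex_of_real (f_dm A I h P \<sigma>2 w)
      = complex_of_real (LINT r|lebesgue_on A. (cmod (apply_Bop A I h P \<sigma>2 B w r))\<^sup>2)"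
    using LHS RHS by (rule trans[OF _ sym])
  then show ?thesis unfolding I_def B_def of_real_eq_iff .
qed

end
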